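(* Let $S$ be a spray on an $n$-dimensional manifold $M$ with horizontal and vertical projectors $h,v$, horizontal distribution $\mathcal H$ and vertical distribution $\mathcal V$, and let $\mathcal P$ be a smooth, nowhere vanishing function (on the open subset of $\mathcal TM$ considered), positively $1$-homogeneous in $y$ and holonomy invariant with respect to $S$. Define $$h_{\mathcal P}=h-\frac{d_J\mathcal P}{\mathcal P}\otimes S,\qquad v_{\mathcal P}=v-\frac{d_v\mathcal P}{\mathcal P}\otimes\mathcal C,\qquad \mathcal H_{\mathcal P}=\operatorname{Im}h_{\mathcal P},\quad \mathcal V_{\mathcal P}=\operatorname{Im}v_{\mathcal P}.$$ Then: (1) (i) $\ker v_{\mathcal P}=\mathcal H\oplus\operatorname{Span}\{\mathcal C\}$; (ii) $\mathcal V_{\mathcal P}$ is an $(n-1)$-dimensional involutive subdistribution of $\mathcal V$; (iii) every $X\in\mathcal V_{\mathcal P}$ satisfies $\mathcal L_X\mathcal P=0$; (iv) $\mathcal V=\mathcal V_{\mathcal P}\oplus\operatorname{Span}\{\mathcal C\}$. (2) (i) $\ker h_{\mathcal P}=\mathcal V\oplus\operatorname{Span}\{S\}$; (ii) $\mathcal H_{\mathcal P}$ is an $(n-1)$-dimensional subdistribution of $\mathcal H$; (iii) every $X\in\mathcal H_{\mathcal P}$ satisfies $\mathcal L_X\mathcal P=0$; (iv) $\mathcal H=\mathcal H_{\mathcal P}\oplus\operatorname{Span}\{S\}$. (3) $J(\mathcal H_{\mathcal P})=\mathcal V_{\mathcal P}$.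
   Context: $TM$ has induced coordinates $(x^i,y^i)$, $\mathcal{T}M=TM\setminus\{0\}$, $\mathcal C=y^i\frac{\partial}{\partial y^i}$ (Liouville vector field), $J=\frac{\partial}{\partial y^i}\otimes dx^i$. A spray is a vector field $S$ on $\mathcal TM$ with $JS=\mathcal C$, $[\mathcal C,S]=S$; locally $S=y^i\frac{\partial}{\partial x^i}-2G^i\frac{\partial}{\partial y^i}$, $G^i$ $2$-homogeneous in $y$. With $G^j_i=\partial G^j/\partial y^i$, $\delta_i=\frac{\partial}{\partial x^i}-G^j_i\frac{\partial}{\partial y^j}$, $\delta y^i=dy^i+G^i_jdx^j$: $h=\delta_i\otimes dx^i$, $v=\frac{\partial}{\partial y^i}\otimes\delta y^i$, $\mathcal H=\operatorname{Im}h$, $\mathcal V=\operatorname{Im}v=\ker d\pi$. For a function $f$ and vector $1$-form $L$, $d_Lf=df\circ L$ (so $(d_J\mathcal P)(X)=(JX)\mathcal P$, $(d_v\mathcal P)(X)=(vX)\mathcal P$); $\omega\otimes Y$ denotes $X\mapsto\omega(X)Y$. $\mathcal P$ is holonomy invariant if $d_h\mathcal P=0$, i.e. $X(\mathcal P)=0$ for all horizontal $X$. *)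

theory Defs
  imports "HOL-Analysis.Analysis"
begin

text \<open>Local (chart) model: a chart domain U of the n-manifold M is an open subset of
  real^'n (n = CARD('n)); TM over U is U \<times> real^'n with induced coordinates (x,y).
  Tangent vectors to TM at p are pairs (u,w) meaning u^i d/dx^i + w^i d/dy^i.\<close>

type_synonym ('n) tv = "(real^'n) \<times> (real^'n)"

fun Ck_on :: "nat \<Rightarrow> ('a::euclidean_space \<Rightarrow> 'b::real_normed_vector) \<Rightarrow> 'a set \<Rightarrow> bool" where
  "Ck_on 0 f S = continuous_on S f"
| "Ck_on (Suc k) f S = (f differentiable_on S \<and>
      (\<forall>v\<in>Basis. Ck_on k (\<lambda>x. frechet_derivative f (at x) v) S))"

definition smooth_on :: "('a::euclidean_space \<Rightarrow> 'b::real_normed_vector) \<Rightarrow> 'a set \<Rightarrow> bool" where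
  "smooth_on f S \<longleftrightarrow> (\<forall>k. Ck_on k f S)"

text \<open>Differential of a function on TM: (dP)_p(X) = X(P) = Lie derivative of P along X at p.\<close>
definition dfun :: "(('n::finite) tv \<Rightarrow> real) \<Rightarrow> 'n tv \<Rightarrow> 'n tv \<Rightarrow> real" where
  "dfun P p X = frechet_derivative P (at p) X"

text \<open>Nonlinear connection coefficients: (Gamma u)^j = G^j_i u^i, G^j_i = dG^j/dy^i.\<close>
definition Gamma :: "(('n::finite) tv \<Rightarrow> real^'n) \<Rightarrow> 'n tv \<Rightarrow> real^'n \<Rightarrow> real^'n" where
  "Gamma G p u = frechet_derivative (\<lambda>y. G (fst p, y)) (at (snd p)) u"

definition spray :: "(('n::finite) tv \<Rightarrow> real^'n) \<Rightarrow> 'n tv \<Rightarrow> 'n tv" where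
  "spray G p = (snd p, - (2 *\<^sub>R G p))"

definition liouville :: "('n::finite) tv \<Rightarrow> 'n tv" where
  "liouville p = (0, snd p)"

definition Jend :: "('n::finite) tv \<Rightarrow> 'n tv" where
  "Jend X = (0, fst X)"

text \<open>h = delta_i (x) dx^i, v = d/dy^i (x) delta y^i, with delta y^i = dy^i + G^i_j dx^j.\<close>
definition hproj :: "(('n::finite) tv \<Rightarrow> real^'n) \<Rightarrow> 'n tv \<Rightarrow> 'n tv \<Rightarrow> 'n tv" where
  "hproj G p X = (fst X, - Gamma G p (fst X))"

definition vproj :: "(('n::finite) tv \<Rightarrow> real^'n) \<Rightarrow> 'n tv \<Rightarrow> 'n tv \<Rightarrow> 'n tv" where
  "vproj G p X = (0, snd X + Gamma G p (fst X))"

definition Hdist :: "(('n::finite) tv \<Rightarrow> real^'n) \<Rightarrow> 'n tv \<Rightarrow> 'n tv set" where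
  "Hdist G p = range (hproj G p)"

text \<open>Vertical distribution = ker d pi.\<close>
definition Vdist :: "('n::finite) tv \<Rightarrow> 'n tv set" where
  "Vdist p = {X. fst X = 0}"

definition hP :: "(('n::finite) tv \<Rightarrow> real^'n) \<Rightarrow> (('n::finite) tv \<Rightarrow> real) \<Rightarrow> 'n tv \<Rightarrow> 'n tv \<Rightarrow> 'n tv" where
  "hP G P p X = hproj G p X - (dfun P p (Jend X) / P p) *\<^sub>R spray G p"

definition vP :: "(('n::finite) tv \<Rightarrow> real^'n) \<Rightarrow> (('n::finite) tv \<Rightarrow> real) \<Rightarrow> 'n tv \<Rightarrow> 'n tv \<Rightarrow> 'n tv" where
  "vP G P p X = vproj G p X - (dfun P p (vproj G p X) / P p) *\<^sub>R liouville p"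

definition HPdist :: "(('n::finite) tv \<Rightarrow> real^'n) \<Rightarrow> (('n::finite) tv \<Rightarrow> real) \<Rightarrow> 'n tv \<Rightarrow> 'n tv set" where
  "HPdist G P p = range (hP G P p)"

definition VPdist :: "(('n::finite) tv \<Rightarrow> real^'n) \<Rightarrow> (('n::finite) tv \<Rightarrow> real) \<Rightarrow> 'n tv \<Rightarrow> 'n tv set" where
  "VPdist G P p = range (vP G P p)"

definition is_direct_sum :: "'a::real_vector set \<Rightarrow> 'a set \<Rightarrow> 'a set \<Rightarrow> bool" where
  "is_direct_sum W A B \<longleftrightarrow> W = {a + b | a b. a \<in> A \<and> b \<in> B} \<and> A \<inter> B = {0}"

definition lie_bracket :: "(('n::finite) tv \<Rightarrow> 'n tv) \<Rightarrow> (('n::finite) tv \<Rightarrow> 'n tv) \<Rightarrow> 'n tv \<Rightarrow> 'n tv" where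
  "lie_bracket X Y p = frechet_derivative Y (at p) (X p) - frechet_derivative X (at p) (Y p)"

definition involutive :: "(('n::finite) tv \<Rightarrow> 'n tv set) \<Rightarrow> 'n tv set \<Rightarrow> bool" where
  "involutive Delta D \<longleftrightarrow>
     (\<forall>W X Y. open W \<and> W \<subseteq> D \<and> smooth_on X W \<and> smooth_on Y W \<and>
        (\<forall>q\<in>W. X q \<in> Delta q \<and> Y q \<in> Delta q) \<longrightarrow> (\<forall>q\<in>W. lie_bracket X Y q \<in> Delta q))"

end

theory Submission
  imports Defs
begin



lemma line_deriv:
  fixes f :: "'a::real_normed_vector \<Rightarrow> 'b::real_normed_vector"
  assumes "(f has_derivative f') (at (a + s *\<^sub>R u))"
  shows "((\<lambda>s. f (a + s *\<^sub>R u)) has_vector_derivative f' u) (at s)"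
proof -
  have l: "linear f'" using assms has_derivative_linear by blast
  have "((\<lambda>s. a + s *\<^sub>R u) has_derivative (\<lambda>h. h *\<^sub>R u)) (at s)"
    by (auto intro!: derivative_eq_intros)
  from has_derivative_compose[OF this assms] have
    "((\<lambda>s. f (a + s *\<^sub>R u)) has_derivative (\<lambda>h. f' (h *\<^sub>R u))) (at s)" by simp
  then show ?thesis unfolding has_vector_derivative_def
    using linear_scale[OF l] by simp
qed

lemma line_deriv_real:
  fixes f :: "'a::real_normed_vector \<Rightarrow> real"
  assumes "(f has_derivative f') (at (a + s *\<^sub>R u))"
  shows "((\<lambda>s. f (a + s *\<^sub>R u)) has_real_derivative f' u) (at s)"
  using line_deriv[OF assms] has_real_derivative_iff_has_vector_derivative by blast

lemma mixed_mvt: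
  fixes f :: "'a::real_normed_vector \<Rightarrow> real"
  assumes inS: "\<And>\<sigma> \<tau>. 0 \<le> \<sigma> \<Longrightarrow> \<sigma> \<le> t \<Longrightarrow> 0 \<le> \<tau> \<Longrightarrow> \<tau> \<le> t \<Longrightarrow> x + \<sigma> *\<^sub>R u + \<tau> *\<^sub>R v \<in> S"
    and t: "0 < t"
    and df: "\<And>y. y \<in> S \<Longrightarrow> (f has_derivative f' y) (at y)"
    and dg: "\<And>y. y \<in> S \<Longrightarrow> ((\<lambda>y. f' y u) has_derivative g' y) (at y)"
  shows "\<exists>\<sigma> \<tau>. 0 < \<sigma> \<and> \<sigma> < t \<and> 0 < \<tau> \<and> \<tau> < t \<and>
     f (x + t *\<^sub>R u + t *\<^sub>R v) - f (x + t *\<^sub>R u) - f (x + t *\<^sub>R v) + f x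
       = t * t * g' (x + \<sigma> *\<^sub>R u + \<tau> *\<^sub>R v) v"
proof -
  define \<phi> where "\<phi> s = f ((x + t *\<^sub>R v) + s *\<^sub>R u) - f (x + s *\<^sub>R u)" for s
  have "\<exists>z. 0 < z \<and> z < t \<and> \<phi> t - \<phi> 0 = (t - 0) * (f' (x + t *\<^sub>R v + z *\<^sub>R u) u - f' (x + z *\<^sub>R u) u)"
  proof (rule MVT2[OF t])
    fix s assume s: "0 \<le> s" "s \<le> t"
    have a0: "x + s *\<^sub>R u + t *\<^sub>R v \<in> S" using inS[of s t] s t by simp
    have a: "x + t *\<^sub>R v + s *\<^sub>R u \<in> S" using a0 by (simp add: algebra_simps)
    have b: "x + s *\<^sub>R u \<in> S" using inS[of s 0] s t by simp
    show "(\<phi> has_real_derivative f' (x + t *\<^sub>R v + s *\<^sub>R u) u - f' (x + s *\<^sub>R u) u) (at s)"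
      unfolding \<phi>_def
      by (intro DERIV_diff line_deriv_real df a b)
  qed
  then obtain \<sigma> where \<sigma>: "0 < \<sigma>" "\<sigma> < t" and e1:
    "\<phi> t - \<phi> 0 = t * (f' (x + t *\<^sub>R v + \<sigma> *\<^sub>R u) u - f' (x + \<sigma> *\<^sub>R u) u)" by auto
  define \<psi> where "\<psi> s = f' ((x + \<sigma> *\<^sub>R u) + s *\<^sub>R v) u" for s
  have "\<exists>z. 0 < z \<and> z < t \<and> \<psi> t - \<psi> 0 = (t - 0) * g' (x + \<sigma> *\<^sub>R u + z *\<^sub>R v) v"
  proof (rule MVT2[OF t])
    fix s assume s: "0 \<le> s" "s \<le> t"
    have a: "x + \<sigma> *\<^sub>R u + s *\<^sub>R v \<in> S" using inS \<sigma> s by simp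
    show "(\<psi> has_real_derivative g' (x + \<sigma> *\<^sub>R u + s *\<^sub>R v) v) (at s)"
      unfolding \<psi>_def using line_deriv_real[OF dg[OF a]] by simp
  qed
  then obtain \<tau> where \<tau>: "0 < \<tau>" "\<tau> < t" and e2:
    "\<psi> t - \<psi> 0 = t * g' (x + \<sigma> *\<^sub>R u + \<tau> *\<^sub>R v) v" by auto
  have "f (x + t *\<^sub>R u + t *\<^sub>R v) - f (x + t *\<^sub>R u) - f (x + t *\<^sub>R v) + f x = \<phi> t - \<phi> 0"
    unfolding \<phi>_def by (simp add: algebra_simps)
  also have "\<dots> = t * (\<psi> t - \<psi> 0)" unfolding e1 \<psi>_def by (simp add: algebra_simps)
  also have "\<dots> = t * t * g' (x + \<sigma> *\<^sub>R u + \<tau> *\<^sub>R v) v" using e2 by simp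
  finally show ?thesis using \<sigma> \<tau> by blast
qed

lemma schwarz:
  fixes f :: "'a::real_normed_vector \<Rightarrow> real"
  assumes S: "open S" "x \<in> S"
    and df: "\<And>y. y \<in> S \<Longrightarrow> (f has_derivative f' y) (at y)"
    and du: "\<And>y. y \<in> S \<Longrightarrow> ((\<lambda>y. f' y u) has_derivative gu y) (at y)"
    and dv: "\<And>y. y \<in> S \<Longrightarrow> ((\<lambda>y. f' y v) has_derivative gv y) (at y)"
    and cu: "continuous_on S (\<lambda>y. gu y v)"
    and cv: "continuous_on S (\<lambda>y. gv y u)"
  shows "gu x v = gv x u"
proof (rule ccontr)
  assume ne: "gu x v \<noteq> gv x u"
  define e where "e = \<bar>gu x v - gv x u\<bar> / 2"
  have e: "e > 0" using ne unfolding e_def by simp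
  have "isCont (\<lambda>y. gu y v) x" using cu S continuous_on_eq_continuous_at by blast
  then obtain d1 where d1: "d1 > 0" "\<And>y. dist y x < d1 \<Longrightarrow> dist (gu y v) (gu x v) < e"
    using e unfolding continuous_at_eps_delta by blast
  have "isCont (\<lambda>y. gv y u) x" using cv S continuous_on_eq_continuous_at by blast
  then obtain d2 where d2: "d2 > 0" "\<And>y. dist y x < d2 \<Longrightarrow> dist (gv y u) (gv x u) < e"
    using e unfolding continuous_at_eps_delta by blast
  obtain r where r: "r > 0" "ball x r \<subseteq> S" using S open_contains_ball by blast
  define m where "m = min r (min d1 d2)"
  have m: "m > 0" using r d1 d2 unfolding m_def by simp
  define t where "t = m / (2 * (norm u + norm v + 1))"
  have t: "t > 0" using m unfolding t_def by (simp add: add_nonneg_pos)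
  have close: "dist (x + \<sigma> *\<^sub>R u + \<tau> *\<^sub>R v) x < m"
    if "0 \<le> \<sigma>" "\<sigma> \<le> t" "0 \<le> \<tau>" "\<tau> \<le> t" for \<sigma> \<tau>
  proof -
    have "dist (x + \<sigma> *\<^sub>R u + \<tau> *\<^sub>R v) x = norm (\<sigma> *\<^sub>R u + \<tau> *\<^sub>R v)"
      by (simp add: dist_norm)
    also have "\<dots> \<le> \<sigma> * norm u + \<tau> * norm v"
      using norm_triangle_ineq[of "\<sigma> *\<^sub>R u" "\<tau> *\<^sub>R v"] that by simp
    also have "\<dots> \<le> t * norm u + t * norm v"
      using that by (intro add_mono mult_right_mono) auto
    also have "\<dots> < t * (2 * (norm u + norm v + 1))"
      using t by (simp add: algebra_simps add_nonneg_pos)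
    also have "\<dots> = m"
    proof -
      have "2 * (norm u + norm v + 1) > (0::real)" by (smt (verit) norm_ge_zero)
      then show ?thesis unfolding t_def by simp
    qed
    finally show ?thesis .
  qed
  have inS: "x + \<sigma> *\<^sub>R u + \<tau> *\<^sub>R v \<in> S"
    if "0 \<le> \<sigma>" "\<sigma> \<le> t" "0 \<le> \<tau>" "\<tau> \<le> t" for \<sigma> \<tau>
    using close[OF that] r unfolding m_def by (auto simp: dist_commute subset_iff)
  have inS': "x + \<sigma> *\<^sub>R v + \<tau> *\<^sub>R u \<in> S"
    if "0 \<le> \<sigma>" "\<sigma> \<le> t" "0 \<le> \<tau>" "\<tau> \<le> t" for \<sigma> \<tau>
    using inS[OF that(3,4,1,2)] by (simp add: algebra_simps)
  obtain s1 t1 where st1: "0 < s1" "s1 < t" "0 < t1" "t1 < t" and E1: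
     "f (x + t *\<^sub>R u + t *\<^sub>R v) - f (x + t *\<^sub>R u) - f (x + t *\<^sub>R v) + f x
       = t * t * gu (x + s1 *\<^sub>R u + t1 *\<^sub>R v) v"
    using mixed_mvt[of t x u v S f f' gu, OF inS t df du] by blast
  obtain s2 t2 where st2: "0 < s2" "s2 < t" "0 < t2" "t2 < t" and E2:
     "f (x + t *\<^sub>R v + t *\<^sub>R u) - f (x + t *\<^sub>R v) - f (x + t *\<^sub>R u) + f x
       = t * t * gv (x + s2 *\<^sub>R v + t2 *\<^sub>R u) u"
    using mixed_mvt[of t x v u S f f' gv, OF inS' t df dv] by blast
  have "x + t *\<^sub>R v + t *\<^sub>R u = x + t *\<^sub>R u + t *\<^sub>R v" by (simp add: algebra_simps)
  with E1 E2 t have eq: "gu (x + s1 *\<^sub>R u + t1 *\<^sub>R v) v = gv (x + s2 *\<^sub>R v + t2 *\<^sub>R u) u"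
    by (simp add: algebra_simps)
  have c1: "dist (x + s1 *\<^sub>R u + t1 *\<^sub>R v) x < d1"
    using close[of s1 t1] st1 unfolding m_def by simp
  have c2: "dist (x + t2 *\<^sub>R u + s2 *\<^sub>R v) x < d2"
    using close[of t2 s2] st2 unfolding m_def by simp
  have c2': "x + s2 *\<^sub>R v + t2 *\<^sub>R u = x + t2 *\<^sub>R u + s2 *\<^sub>R v" by (simp add: algebra_simps)
  have "dist (gu (x + s1 *\<^sub>R u + t1 *\<^sub>R v) v) (gu x v) < e" using d1(2)[OF c1] .
  moreover have "dist (gv (x + s2 *\<^sub>R v + t2 *\<^sub>R u) u) (gv x u) < e" using d2(2)[OF c2] unfolding c2' .
  ultimately have "\<bar>gu x v - gv x u\<bar> < 2 * e" using eq by (simp add: dist_real_def)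
  then show False unfolding e_def by simp
qed

lemma smooth_Ck: "smooth_on f S \<Longrightarrow> Ck_on k f S"
  unfolding smooth_on_def by blast

lemma smooth_diff_at:
  fixes f :: "'a::euclidean_space \<Rightarrow> 'b::real_normed_vector"
  assumes "smooth_on f S" "open S" "x \<in> S"
  shows "f differentiable (at x)"
proof -
  have "Ck_on (Suc 0) f S" using smooth_Ck[OF assms(1)] .
  then have "f differentiable_on S" by simp
  then show ?thesis using assms differentiable_on_eq_differentiable_at by blast
qed

lemma smooth_C2:
  fixes f :: "'a::euclidean_space \<Rightarrow> 'b::real_normed_vector"
  assumes "smooth_on f S" "open S"
  shows "\<And>b y. b \<in> Basis \<Longrightarrow> y \<in> S \<Longrightarrow> (\<lambda>y. frechet_derivative f (at y) b) differentiable (at y)"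
    and "\<And>b c. b \<in> Basis \<Longrightarrow> c \<in> Basis \<Longrightarrow>
       continuous_on S (\<lambda>y. frechet_derivative (\<lambda>y. frechet_derivative f (at y) b) (at y) c)"
proof -
  have C: "Ck_on (Suc (Suc 0)) f S" using smooth_Ck[OF assms(1)] .
  fix b y :: 'a assume "b \<in> Basis" "y \<in> S"
  then have "(\<lambda>y. frechet_derivative f (at y) b) differentiable_on S" using C by simp
  then show "(\<lambda>y. frechet_derivative f (at y) b) differentiable (at y)"
    using assms(2) \<open>y \<in> S\<close> differentiable_on_eq_differentiable_at by blast
next
  have C: "Ck_on (Suc (Suc 0)) f S" using smooth_Ck[OF assms(1)] .
  fix b c :: 'a assume "b \<in> Basis" "c \<in> Basis"
  then show "continuous_on S (\<lambda>y. frechet_derivative (\<lambda>y. frechet_derivative f (at y) b) (at y) c)"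
    using C by simp
qed

lemma lin_expand:
  fixes l :: "'a::euclidean_space \<Rightarrow> real"
  assumes "linear l"
  shows "l v = (\<Sum>b\<in>Basis. (v \<bullet> b) * l b)"
proof -
  have "l v = l (\<Sum>b\<in>Basis. (v \<bullet> b) *\<^sub>R b)" by (simp add: euclidean_representation)
  also have "\<dots> = (\<Sum>b\<in>Basis. (v \<bullet> b) * l b)"
    by (simp add: linear_sum[OF assms] linear_scale[OF assms])
  finally show ?thesis .
qed

lemma sym2:
  fixes f :: "'a::euclidean_space \<Rightarrow> real"
  assumes "smooth_on f S" "open S" "x \<in> S" "b \<in> Basis" "c \<in> Basis"
  shows "frechet_derivative (\<lambda>y. frechet_derivative f (at y) b) (at x) c
       = frechet_derivative (\<lambda>y. frechet_derivative f (at y) c) (at x) b"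
proof (rule schwarz[where S=S and f=f and f'="\<lambda>y. frechet_derivative f (at y)"])
  show "open S" "x \<in> S" by fact+
  fix y assume y: "y \<in> S"
  show "(f has_derivative frechet_derivative f (at y)) (at y)"
    using smooth_diff_at[OF assms(1,2) y] frechet_derivative_works by blast
  show "((\<lambda>y. frechet_derivative f (at y) b) has_derivative
      frechet_derivative (\<lambda>y. frechet_derivative f (at y) b) (at y)) (at y)"
    using smooth_C2(1)[OF assms(1,2) assms(4) y] frechet_derivative_works by blast
  show "((\<lambda>y. frechet_derivative f (at y) c) has_derivative
      frechet_derivative (\<lambda>y. frechet_derivative f (at y) c) (at y)) (at y)"
    using smooth_C2(1)[OF assms(1,2) assms(5) y] frechet_derivative_works by blast
next
  show "continuous_on S (\<lambda>y. frechet_derivative (\<lambda>y. frechet_derivative f (at y) b) (at y) c)"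
    using smooth_C2(2)[OF assms(1,2) assms(4,5)] .
  show "continuous_on S (\<lambda>y. frechet_derivative (\<lambda>y. frechet_derivative f (at y) c) (at y) b)"
    using smooth_C2(2)[OF assms(1,2) assms(5,4)] .
qed

lemma deriv_along:
  fixes f :: "'a::euclidean_space \<Rightarrow> real" and Y :: "'a \<Rightarrow> 'a"
  assumes f: "smooth_on f S" "open S" and W: "open W" "W \<subseteq> S" "q \<in> W"
    and Y: "Y differentiable (at q)"
    and zero: "\<And>y. y \<in> W \<Longrightarrow> frechet_derivative f (at y) (Y y) = 0"
  shows "frechet_derivative f (at q) (frechet_derivative Y (at q) h) =
     - (\<Sum>b\<in>Basis. \<Sum>c\<in>Basis. (Y q \<bullet> b) * (h \<bullet> c) *
          frechet_derivative (\<lambda>y. frechet_derivative f (at y) b) (at q) c)"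
proof -
  define d1 where "d1 b y = frechet_derivative f (at y) b" for b y
  define d2 where "d2 b = frechet_derivative (d1 b) (at q)" for b
  define Y' where "Y' = frechet_derivative Y (at q)"
  define K where "K y = (\<Sum>b\<in>Basis. (Y y \<bullet> b) * d1 b y)" for y
  have qS: "q \<in> S" using W by blast
  have linf: "linear (frechet_derivative f (at y))" if "y \<in> S" for y
    using linear_frechet_derivative smooth_diff_at[OF f that] by blast
  have Kz: "K y = 0" if "y \<in> W" for y
  proof -
    have yS: "y \<in> S" using that W by blast
    have "K y = frechet_derivative f (at y) (Y y)"
      using lin_expand[OF linf[OF yS], of "Y y"] unfolding K_def d1_def by simp
    then show ?thesis using zero[OF that] by simp
  qed
  have dY: "(Y has_derivative Y') (at q)" using Y frechet_derivative_works unfolding Y'_def by blast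
  have dd1: "(d1 b has_derivative d2 b) (at q)" if "b \<in> Basis" for b
    using smooth_C2(1)[OF f that qS] frechet_derivative_works unfolding d1_def d2_def by blast
  have lin2: "linear (d2 b)" if "b \<in> Basis" for b
    using dd1[OF that] has_derivative_linear by blast
  have dterm: "((\<lambda>y. (Y y \<bullet> b) * d1 b y) has_derivative
      (\<lambda>h. (Y q \<bullet> b) * d2 b h + (Y' h \<bullet> b) * d1 b q)) (at q)" if "b \<in> Basis" for b
    by (rule has_derivative_mult[OF has_derivative_inner_left[OF dY] dd1[OF that]])
  have A: "(K has_derivative (\<lambda>h. \<Sum>b\<in>Basis. (Y q \<bullet> b) * d2 b h + (Y' h \<bullet> b) * d1 b q)) (at q)"
    unfolding K_def by (rule has_derivative_sum[OF dterm])
  have B: "(K has_derivative (\<lambda>h. 0)) (at q)"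
    by (rule has_derivative_transform_within_open[OF has_derivative_const W(1) W(3)]) (simp add: Kz)
  have E: "(\<Sum>b\<in>Basis. (Y q \<bullet> b) * d2 b h + (Y' h \<bullet> b) * d1 b q) = 0"
    using fun_cong[OF has_derivative_unique[OF A B], of h] by simp
  have e1: "(\<Sum>b\<in>Basis. (Y' h \<bullet> b) * d1 b q) = frechet_derivative f (at q) (Y' h)"
    unfolding d1_def using lin_expand[OF linf[OF qS], of "Y' h"] by simp
  have e2: "d2 b h = (\<Sum>c\<in>Basis. (h \<bullet> c) * d2 b c)" if "b \<in> Basis" for b
    using lin_expand[OF lin2[OF that]] by blast
  have "(\<Sum>b\<in>Basis. (Y q \<bullet> b) * d2 b h) = (\<Sum>b\<in>Basis. \<Sum>c\<in>Basis. (Y q \<bullet> b) * (h \<bullet> c) * d2 b c)"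
  proof (rule sum.cong[OF refl])
    fix b :: 'a assume b: "b \<in> Basis"
    show "(Y q \<bullet> b) * d2 b h = (\<Sum>c\<in>Basis. (Y q \<bullet> b) * (h \<bullet> c) * d2 b c)"
      apply (subst e2[OF b]) by (simp add: sum_distrib_left mult.assoc)
  qed
  moreover have "(\<Sum>b\<in>Basis. (Y q \<bullet> b) * d2 b h) + (\<Sum>b\<in>Basis. (Y' h \<bullet> b) * d1 b q) = 0"
    using E by (simp add: sum.distrib)
  ultimately have "frechet_derivative f (at q) (Y' h) =
     - (\<Sum>b\<in>Basis. \<Sum>c\<in>Basis. (Y q \<bullet> b) * (h \<bullet> c) * d2 b c)"
    using e1 by linarith
  then show ?thesis unfolding Y'_def d2_def d1_def .
qed


lemma bracket_zero:
  fixes f :: "'a::euclidean_space \<Rightarrow> real" and X Y :: "'a \<Rightarrow> 'a"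
  assumes f: "smooth_on f S" "open S" and W: "open W" "W \<subseteq> S" "q \<in> W"
    and X: "X differentiable (at q)" and Y: "Y differentiable (at q)"
    and zX: "\<And>y. y \<in> W \<Longrightarrow> frechet_derivative f (at y) (X y) = 0"
    and zY: "\<And>y. y \<in> W \<Longrightarrow> frechet_derivative f (at y) (Y y) = 0"
  shows "frechet_derivative f (at q) (frechet_derivative Y (at q) (X q) - frechet_derivative X (at q) (Y q)) = 0"
proof -
  define d2 where "d2 b c = frechet_derivative (\<lambda>y. frechet_derivative f (at y) b) (at q) c" for b c
  have qS: "q \<in> S" using W by blast
  have lin: "linear (frechet_derivative f (at q))"
    using linear_frechet_derivative smooth_diff_at[OF f qS] by blast
  have a: "frechet_derivative f (at q) (frechet_derivative Y (at q) (X q)) =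
     - (\<Sum>b\<in>Basis. \<Sum>c\<in>Basis. (Y q \<bullet> b) * (X q \<bullet> c) * d2 b c)"
    unfolding d2_def by (rule deriv_along[OF f W Y zY])
  have b: "frechet_derivative f (at q) (frechet_derivative X (at q) (Y q)) =
     - (\<Sum>b\<in>Basis. \<Sum>c\<in>Basis. (X q \<bullet> b) * (Y q \<bullet> c) * d2 b c)"
    unfolding d2_def by (rule deriv_along[OF f W X zX])
  have "(\<Sum>b\<in>Basis. \<Sum>c\<in>Basis. (X q \<bullet> b) * (Y q \<bullet> c) * d2 b c)
      = (\<Sum>c\<in>Basis. \<Sum>b\<in>Basis. (X q \<bullet> b) * (Y q \<bullet> c) * d2 b c)"
    by (rule sum.swap)
  also have "\<dots> = (\<Sum>b\<in>Basis. \<Sum>c\<in>Basis. (Y q \<bullet> b) * (X q \<bullet> c) * d2 b c)"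
  proof (intro sum.cong refl)
    fix b c :: 'a assume "b \<in> Basis" "c \<in> Basis"
    then have "d2 c b = d2 b c" unfolding d2_def using sym2[OF f qS] by blast
    then show "(X q \<bullet> c) * (Y q \<bullet> b) * d2 c b = (Y q \<bullet> b) * (X q \<bullet> c) * d2 b c" by simp
  qed
  finally show ?thesis using a b linear_diff[OF lin] by simp
qed

lemma euler_P:
  fixes P :: "('n::finite) tv \<Rightarrow> real"
  assumes D: "open D" "smooth_on P D" "(x, y) \<in> D"
    and hom: "\<And>t. t > 0 \<Longrightarrow> P (x, t *\<^sub>R y) = t * P (x, y)"
  shows "dfun P (x, y) (0, y) = P (x, y)"
proof -
  have "(P has_derivative frechet_derivative P (at (x, y))) (at ((x, 0) + 1 *\<^sub>R (0, y)))"
    using smooth_diff_at[OF D(2,1,3)] unfolding frechet_derivative_works by simp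
  from line_deriv_real[OF this] have
    d1: "((\<lambda>t. P (x, t *\<^sub>R y)) has_real_derivative dfun P (x, y) (0, y)) (at 1)"
    unfolding dfun_def by simp
  have d2: "((\<lambda>t. t * P (x, y)) has_real_derivative P (x, y)) (at 1)"
    by (auto intro!: derivative_eq_intros)
  have d3: "((\<lambda>t. P (x, t *\<^sub>R y)) has_real_derivative P (x, y)) (at 1)"
    by (rule has_field_derivative_transform_within_open[OF d2, of "{0<..}"]) (auto simp: hom)
  show ?thesis using DERIV_unique[OF d1 d3] .
qed

lemma euler_G:
  fixes G :: "('n::finite) tv \<Rightarrow> real^'n"
  assumes G: "smooth_on G (U \<times> (UNIV - {0}))" "open U" "x \<in> U" "y \<noteq> 0"
    and hom: "\<And>t. t > 0 \<Longrightarrow> G (x, t *\<^sub>R y) = t\<^sup>2 *\<^sub>R G (x, y)"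
  shows "Gamma G (x, y) y = 2 *\<^sub>R G (x, y)"
    and "linear (Gamma G (x, y))"
proof -
  have op: "open (U \<times> (UNIV - {0::real^'n}))" using G(2) by (intro open_Times) auto
  have "G differentiable (at (x, y))" using smooth_diff_at[OF G(1) op] G(3,4) by simp
  then obtain G' where dG: "(G has_derivative G') (at (x, y))"
    unfolding differentiable_def by blast
  have dp: "((\<lambda>z. (x, z)) has_derivative (\<lambda>h. (0, h))) (at y)"
    by (auto intro!: derivative_eq_intros)
  have "((\<lambda>z. G (x, z)) has_derivative (\<lambda>h. G' (0, h))) (at y)"
    using has_derivative_compose[OF dp, of G G'] dG by simp
  then have dGy: "((\<lambda>z. G (x, z)) has_derivative Gamma G (x, y)) (at y)"
    unfolding Gamma_def using frechet_derivative_works differentiableI by fastforce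
  then show "linear (Gamma G (x, y))" using has_derivative_linear by blast
  have "((\<lambda>z. G (x, z)) has_derivative Gamma G (x, y)) (at (0 + 1 *\<^sub>R y))" using dGy by simp
  from line_deriv[OF this] have
    d1: "((\<lambda>t. G (x, t *\<^sub>R y)) has_vector_derivative Gamma G (x, y) y) (at 1)" by simp
  have d2: "((\<lambda>t. t\<^sup>2 *\<^sub>R G (x, y)) has_vector_derivative (2 *\<^sub>R G (x, y))) (at 1)"
    by (auto intro!: derivative_eq_intros)
  have d3: "((\<lambda>t. G (x, t *\<^sub>R y)) has_vector_derivative (2 *\<^sub>R G (x, y))) (at 1)"
    by (rule has_vector_derivative_transform_within_open[OF d2, of "{0<..}"]) (auto simp: hom)
  show "Gamma G (x, y) y = 2 *\<^sub>R G (x, y)" using vector_derivative_unique_at[OF d1 d3] .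
qed



lemma dim_ker:
  fixes l :: "real^'n \<Rightarrow> real" and F :: "real^('n::finite) \<Rightarrow> 'n tv" and y :: "real^'n"
  assumes "linear l" "l y \<noteq> 0" "linear F" "inj F"
  shows "dim (F ` {w. l w = 0}) = CARD('n) - 1"
proof -
  define a where "a = adjoint l 1"
  have la: "l w = a \<bullet> w" for w
    using adjoint_clauses(2)[OF assms(1), of 1 w] unfolding a_def by simp
  have "a \<noteq> 0" using assms(2) la[of y] by auto
  have e1: "dim (F ` {w. l w = 0}) = dim {w. l w = 0}"
    by (rule dim_image_eq[OF assms(3)]) (use assms(4) in \<open>auto simp: inj_on_def inj_def\<close>)
  have e2: "{w. l w = 0} = {w. a \<bullet> w = 0}" using la by auto
  have e3: "dim {w. a \<bullet> w = 0} = DIM(real^'n) - 1" by (rule dim_hyperplane[OF \<open>a \<noteq> 0\<close>])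
  show ?thesis using e1 e2 e3 by simp
qed


lemma alg:
  fixes L :: "('n::finite) tv \<Rightarrow> real" and Gm :: "real^'n \<Rightarrow> real^'n" and y g :: "real^'n"
    and Pv :: real and vPf hPf :: "'n tv \<Rightarrow> 'n tv" and Hd :: "'n tv set"
  assumes lL: "linear L" and lG: "linear Gm" and Ly: "L (0, y) = Pv" and Pv: "Pv \<noteq> 0"
    and Gy: "Gm y = 2 *\<^sub>R g" and y0: "y \<noteq> 0" and hol: "\<And>u. L (u, - Gm u) = 0"
    and vPf: "\<And>X. vPf X = (0, snd X + Gm (fst X)) - (L (0, snd X + Gm (fst X)) / Pv) *\<^sub>R (0, y)"
    and hPf: "\<And>X. hPf X = (fst X, - Gm (fst X)) - (L (0, fst X) / Pv) *\<^sub>R (y, - (2 *\<^sub>R g))"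
    and Hd: "Hd = range (\<lambda>X. (fst X, - Gm (fst X)))"
  shows "range vPf = {Z. fst Z = 0 \<and> L Z = 0}"
   and "is_direct_sum {X. vPf X = 0} Hd (span {(0, y)})"
   and "range vPf \<subseteq> {X. fst X = 0}"
   and "dim (range vPf) = CARD('n) - 1"
   and "\<forall>X\<in>range vPf. L X = 0"
   and "is_direct_sum {X. fst X = 0} (range vPf) (span {(0, y)})"
   and "is_direct_sum {X. hPf X = 0} {X. fst X = 0} (span {(y, - (2 *\<^sub>R g))})"
   and "range hPf \<subseteq> Hd"
   and "dim (range hPf) = CARD('n) - 1"
   and "\<forall>X\<in>range hPf. L X = 0"
   and "is_direct_sum Hd (range hPf) (span {(y, - (2 *\<^sub>R g))})"
   and "Jend ` range hPf = range vPf"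
proof -
  define l1 where "l1 u = L (u, 0)" for u
  define l2 where "l2 w = L (0, w)" for w
  have Lsplit: "L Z = l1 (fst Z) + l2 (snd Z)" for Z
  proof -
    have "Z = (fst Z, 0) + (0, snd Z)" by simp
    then have "L Z = L ((fst Z, 0) + (0, snd Z))" by metis
    then show ?thesis unfolding l1_def l2_def linear_add[OF lL] .
  qed
  have l2: "linear l2"
  proof (rule linearI)
    fix a b show "l2 (a + b) = l2 a + l2 b"
      unfolding l2_def using linear_add[OF lL, of "(0, a)" "(0, b)"] by simp
  next
    fix c :: real and a show "l2 (c *\<^sub>R a) = c *\<^sub>R l2 a"
      unfolding l2_def using linear_scale[OF lL, of c "(0, a)"] by simp
  qed
  note G_simps = linear_add[OF lG] linear_scale[OF lG] linear_diff[OF lG] linear_neg[OF lG] linear_0[OF lG]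
  note l2_simps = linear_add[OF l2] linear_scale[OF l2] linear_diff[OF l2] linear_neg[OF l2] linear_0[OF l2]
  have Ly2: "l2 y = Pv" unfolding l2_def by (rule Ly)
  have hol2: "l1 u = l2 (Gm u)" for u
    using hol[of u] Lsplit[of "(u, - Gm u)"] l2_simps by simp
  have l1_0: "l1 0 = 0" using hol2[of 0] G_simps l2_simps by simp
  have vPf': "vPf X = (0, (snd X + Gm (fst X)) - (l2 (snd X + Gm (fst X)) / Pv) *\<^sub>R y)" for X
    unfolding vPf l2_def by (simp add: prod_eq_iff)
  have hPf': "hPf X = (fst X - (l2 (fst X) / Pv) *\<^sub>R y, - Gm (fst X - (l2 (fst X) / Pv) *\<^sub>R y))" for X
    unfolding hPf l2_def by (simp add: prod_eq_iff G_simps Gy)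
  have Hd': "Z \<in> Hd \<longleftrightarrow> snd Z = - Gm (fst Z)" for Z
    unfolding Hd by (auto simp: image_iff prod_eq_iff)
  have spn: "span {z} = range (\<lambda>k. k *\<^sub>R z)" for z :: "'n tv" by (rule span_singleton)
  have cancel: "l2 (w - (l2 w / Pv) *\<^sub>R y) = 0" for w
    using Pv by (simp add: l2_simps Ly2)
  have cancel2: "l2 (k *\<^sub>R y) / Pv = k" for k
    using Pv by (simp add: l2_simps Ly2)
  show VPc: "range vPf = {Z. fst Z = 0 \<and> L Z = 0}"
  proof (intro set_eqI iffI)
    fix Z assume "Z \<in> range vPf"
    then obtain X where "Z = vPf X" by blast
    then show "Z \<in> {Z. fst Z = 0 \<and> L Z = 0}"
      by (simp add: vPf' Lsplit l1_0 cancel)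
  next
    fix Z assume Z: "Z \<in> {Z. fst Z = 0 \<and> L Z = 0}"
    have z1: "fst Z = 0" using Z by simp
    have z2: "l2 (snd Z) = 0" using Z Lsplit[of Z] l1_0 z1 by simp
    have "vPf Z = Z" by (simp add: vPf' G_simps prod_eq_iff z1 z2)
    then show "Z \<in> range vPf" by (metis rangeI)
  qed
  show "range vPf \<subseteq> {X. fst X = 0}" using VPc by blast
  show "\<forall>X\<in>range vPf. L X = 0" using VPc by blast
  have VPc2: "range vPf = Pair 0 ` {w. l2 w = 0}"
    unfolding VPc by (auto simp: Lsplit l1_0 image_iff intro: exI[of _ "snd _"])
  show "dim (range vPf) = CARD('n) - 1" unfolding VPc2
    by (rule dim_ker[OF l2, of y]) (auto simp: Ly2 Pv inj_def intro: linearI)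
  have kerv: "vPf X = 0 \<longleftrightarrow> (\<exists>c. snd X + Gm (fst X) = c *\<^sub>R y)" for X
  proof
    assume "vPf X = 0"
    then have "snd X + Gm (fst X) - (l2 (snd X + Gm (fst X)) / Pv) *\<^sub>R y = 0" by (simp add: vPf' prod_eq_iff)
    then have "snd X + Gm (fst X) = (l2 (snd X + Gm (fst X)) / Pv) *\<^sub>R y" by (simp add: right_minus_eq)
    then show "\<exists>c. snd X + Gm (fst X) = c *\<^sub>R y" by blast
  next
    assume "\<exists>c. snd X + Gm (fst X) = c *\<^sub>R y"
    then obtain c where "snd X + Gm (fst X) = c *\<^sub>R y" by blast
    then show "vPf X = 0" by (simp add: vPf' cancel2 zero_prod_def)
  qed
  show "is_direct_sum {X. vPf X = 0} Hd (span {(0, y)})"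
    unfolding is_direct_sum_def spn
  proof (intro conjI set_eqI iffI)
    fix X :: "'n tv" assume "X \<in> {X. vPf X = 0}"
    then obtain c where c: "snd X + Gm (fst X) = c *\<^sub>R y" using kerv by blast
    have "X = (fst X, - Gm (fst X)) + c *\<^sub>R (0, y)" using c by (simp add: prod_eq_iff algebra_simps)
    moreover have "(fst X, - Gm (fst X)) \<in> Hd" using Hd' by simp
    ultimately show "X \<in> {a + b |a b. a \<in> Hd \<and> b \<in> range (\<lambda>k. k *\<^sub>R (0, y))}" by blast
  next
    fix X :: "'n tv" assume "X \<in> {a + b |a b. a \<in> Hd \<and> b \<in> range (\<lambda>k. k *\<^sub>R (0, y))}"
    then obtain a k where "X = a + k *\<^sub>R (0, y)" "a \<in> Hd" by blast
    then have "snd X + Gm (fst X) = k *\<^sub>R y" using Hd'[of a] by (simp add: G_simps)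
    then show "X \<in> {X. vPf X = 0}" using kerv by blast
  next
    fix X :: "'n tv" assume "X \<in> Hd \<inter> range (\<lambda>k. k *\<^sub>R (0, y))"
    then obtain k where k: "X = k *\<^sub>R (0, y)" "X \<in> Hd" by blast
    then have "k *\<^sub>R y = 0" using Hd'[of X] by (simp add: G_simps)
    then have "k = 0" using y0 by simp
    then show "X \<in> {0}" using k by (simp add: zero_prod_def)
  next
    fix X :: "'n tv" assume "X \<in> {0}"
    then have X0: "X = 0 *\<^sub>R (0, y)" by (simp add: zero_prod_def)
    have "X \<in> Hd" using Hd'[of X] X0 by (simp add: G_simps)
    then show "X \<in> Hd \<inter> range (\<lambda>k. k *\<^sub>R (0, y))" using X0 by blast
  qed
  show "is_direct_sum {X. fst X = 0} (range vPf) (span {(0, y)})"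
    unfolding is_direct_sum_def spn VPc
  proof (intro conjI set_eqI iffI)
    fix X :: "'n tv" assume X: "X \<in> {X. fst X = 0}"
    define k where "k = l2 (snd X) / Pv"
    have "X = (0, snd X - k *\<^sub>R y) + k *\<^sub>R (0, y)" using X by (simp add: prod_eq_iff)
    moreover have "(0, snd X - k *\<^sub>R y) \<in> {Z. fst Z = 0 \<and> L Z = 0}"
      using cancel[of "snd X"] unfolding k_def by (simp add: Lsplit l1_0)
    ultimately show "X \<in> {a + b |a b. a \<in> {Z. fst Z = 0 \<and> L Z = 0} \<and> b \<in> range (\<lambda>k. k *\<^sub>R (0, y))}"
      by blast
  next
    fix X :: "'n tv" assume "X \<in> {a + b |a b. a \<in> {Z. fst Z = 0 \<and> L Z = 0} \<and> b \<in> range (\<lambda>k. k *\<^sub>R (0, y))}"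
    then show "X \<in> {X. fst X = 0}" by auto
  next
    fix X :: "'n tv" assume "X \<in> {Z. fst Z = 0 \<and> L Z = 0} \<inter> range (\<lambda>k. k *\<^sub>R (0, y))"
    then obtain k where k: "X = k *\<^sub>R (0, y)" "L X = 0" by blast
    then have "k * Pv = 0" using Lsplit[of X] l1_0 by (simp add: l2_simps Ly2)
    then have "k = 0" using Pv by simp
    then show "X \<in> {0}" using k by (simp add: zero_prod_def)
  next
    fix X :: "'n tv" assume "X \<in> {0}"
    then have X0: "X = 0 *\<^sub>R (0, y)" by (simp add: zero_prod_def)
    have "L X = 0" using X0 linear_0[OF lL] by (simp add: zero_prod_def)
    then show "X \<in> {Z. fst Z = 0 \<and> L Z = 0} \<inter> range (\<lambda>k. k *\<^sub>R (0, y))" using X0 by auto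
  qed
  have kerh: "hPf X = 0 \<longleftrightarrow> (\<exists>c. fst X = c *\<^sub>R y)" for X
  proof
    assume "hPf X = 0"
    then have "fst X - (l2 (fst X) / Pv) *\<^sub>R y = 0" by (simp add: hPf' prod_eq_iff)
    then have "fst X = (l2 (fst X) / Pv) *\<^sub>R y" by (simp add: right_minus_eq)
    then show "\<exists>c. fst X = c *\<^sub>R y" by blast
  next
    assume "\<exists>c. fst X = c *\<^sub>R y"
    then obtain c where "fst X = c *\<^sub>R y" by blast
    then show "hPf X = 0" by (simp add: hPf' cancel2 G_simps zero_prod_def)
  qed
  show "is_direct_sum {X. hPf X = 0} {X. fst X = 0} (span {(y, - (2 *\<^sub>R g))})"
    unfolding is_direct_sum_def spn
  proof (intro conjI set_eqI iffI)
    fix X :: "'n tv" assume "X \<in> {X. hPf X = 0}"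
    then obtain c where c: "fst X = c *\<^sub>R y" using kerh by blast
    have "X = (0, snd X + (2 * c) *\<^sub>R g) + c *\<^sub>R (y, - (2 *\<^sub>R g))" using c by (simp add: prod_eq_iff)
    then show "X \<in> {a + b |a b. a \<in> {X. fst X = 0} \<and> b \<in> range (\<lambda>k. k *\<^sub>R (y, - (2 *\<^sub>R g)))}"
      by fastforce
  next
    fix X :: "'n tv" assume "X \<in> {a + b |a b. a \<in> {X. fst X = 0} \<and> b \<in> range (\<lambda>k. k *\<^sub>R (y, - (2 *\<^sub>R g)))}"
    then obtain a k where "X = a + k *\<^sub>R (y, - (2 *\<^sub>R g))" "fst a = 0" by blast
    then have "fst X = k *\<^sub>R y" by simp
    then show "X \<in> {X. hPf X = 0}" using kerh by blast
  next
    fix X :: "'n tv" assume "X \<in> {X. fst X = 0} \<inter> range (\<lambda>k. k *\<^sub>R (y, - (2 *\<^sub>R g)))"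
    then obtain k where k: "X = k *\<^sub>R (y, - (2 *\<^sub>R g))" "fst X = 0" by blast
    then have "k *\<^sub>R y = 0" by simp
    then have "k = 0" using y0 by simp
    then show "X \<in> {0}" using k by (simp add: zero_prod_def)
  next
    fix X :: "'n tv" assume "X \<in> {0}"
    then have X0: "X = 0 *\<^sub>R (y, - (2 *\<^sub>R g))" by (simp add: zero_prod_def)
    then show "X \<in> {X. fst X = 0} \<inter> range (\<lambda>k. k *\<^sub>R (y, - (2 *\<^sub>R g)))" by auto
  qed
  have HPc: "range hPf = {Z. snd Z = - Gm (fst Z) \<and> l2 (fst Z) = 0}"
  proof (intro set_eqI iffI)
    fix Z assume "Z \<in> range hPf"
    then obtain X where "Z = hPf X" by blast
    then show "Z \<in> {Z. snd Z = - Gm (fst Z) \<and> l2 (fst Z) = 0}"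
      by (simp add: hPf' cancel)
  next
    fix Z assume Z: "Z \<in> {Z. snd Z = - Gm (fst Z) \<and> l2 (fst Z) = 0}"
    then have "hPf Z = Z" by (simp add: hPf' prod_eq_iff)
    then show "Z \<in> range hPf" by (metis rangeI)
  qed
  show "range hPf \<subseteq> Hd" using HPc Hd' by blast
  show "\<forall>X\<in>range hPf. L X = 0"
  proof
    fix X :: "'n tv" assume "X \<in> range hPf"
    then have "snd X = - Gm (fst X)" using HPc by blast
    then show "L X = 0" using hol[of "fst X"] by (metis prod.collapse)
  qed
  have HPc2: "range hPf = (\<lambda>u. (u, - Gm u)) ` {u. l2 u = 0}"
    unfolding HPc by (auto simp: image_iff intro: exI[of _ "fst _"])
  have linF: "linear (\<lambda>u. (u, - Gm u))"
    by (rule linearI) (simp_all add: G_simps)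
  show "dim (range hPf) = CARD('n) - 1" unfolding HPc2
    by (rule dim_ker[OF l2 _ linF, of y]) (auto simp: Ly2 Pv inj_def)
  show "is_direct_sum Hd (range hPf) (span {(y, - (2 *\<^sub>R g))})"
    unfolding is_direct_sum_def spn HPc
  proof (intro conjI set_eqI iffI)
    fix X :: "'n tv" assume X: "X \<in> Hd"
    define k where "k = l2 (fst X) / Pv"
    have "X = (fst X - k *\<^sub>R y, - Gm (fst X - k *\<^sub>R y)) + k *\<^sub>R (y, - (2 *\<^sub>R g))"
      using X Hd' by (simp add: prod_eq_iff G_simps Gy)
    moreover have "(fst X - k *\<^sub>R y, - Gm (fst X - k *\<^sub>R y)) \<in> {Z. snd Z = - Gm (fst Z) \<and> l2 (fst Z) = 0}"
      using cancel[of "fst X"] unfolding k_def by simp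
    ultimately show "X \<in> {a + b |a b. a \<in> {Z. snd Z = - Gm (fst Z) \<and> l2 (fst Z) = 0} \<and> b \<in> range (\<lambda>k. k *\<^sub>R (y, - (2 *\<^sub>R g)))}"
      by blast
  next
    fix X :: "'n tv" assume "X \<in> {a + b |a b. a \<in> {Z. snd Z = - Gm (fst Z) \<and> l2 (fst Z) = 0} \<and> b \<in> range (\<lambda>k. k *\<^sub>R (y, - (2 *\<^sub>R g)))}"
    then obtain a k where "X = a + k *\<^sub>R (y, - (2 *\<^sub>R g))" "snd a = - Gm (fst a)" by blast
    then show "X \<in> Hd" using Hd' by (simp add: G_simps Gy)
  next
    fix X :: "'n tv" assume "X \<in> {Z. snd Z = - Gm (fst Z) \<and> l2 (fst Z) = 0} \<inter> range (\<lambda>k. k *\<^sub>R (y, - (2 *\<^sub>R g)))"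
    then obtain k where k: "X = k *\<^sub>R (y, - (2 *\<^sub>R g))" "l2 (fst X) = 0" by blast
    then have "k * Pv = 0" by (simp add: l2_simps Ly2)
    then have "k = 0" using Pv by simp
    then show "X \<in> {0}" using k by (simp add: zero_prod_def)
  next
    fix X :: "'n tv" assume "X \<in> {0}"
    then have X0: "X = 0 *\<^sub>R (y, - (2 *\<^sub>R g))" by (simp add: zero_prod_def)
    have "snd X = - Gm (fst X) \<and> l2 (fst X) = 0" using X0 by (simp add: G_simps l2_simps)
    then show "X \<in> {Z. snd Z = - Gm (fst Z) \<and> l2 (fst Z) = 0} \<inter> range (\<lambda>k. k *\<^sub>R (y, - (2 *\<^sub>R g)))"
      using X0 by blast
  qed
  show "Jend ` range hPf = range vPf"
    unfolding HPc2 VPc2 image_image Jend_def by simp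
qed


lemma fst_deriv_zero:
  fixes Y :: "('n::finite) tv \<Rightarrow> 'n tv"
  assumes "open W" "q \<in> W" "Y differentiable (at q)" "\<And>y. y \<in> W \<Longrightarrow> fst (Y y) = 0"
  shows "fst (frechet_derivative Y (at q) h) = 0"
proof -
  have A: "((\<lambda>y. fst (Y y)) has_derivative (\<lambda>h. fst (frechet_derivative Y (at q) h))) (at q)"
    using assms(3) unfolding frechet_derivative_works by (rule has_derivative_fst)
  have B: "((\<lambda>y. fst (Y y)) has_derivative (\<lambda>h. 0)) (at q)"
    by (rule has_derivative_transform_within_open[OF has_derivative_const assms(1,2)]) (simp add: assms(4))
  show ?thesis using fun_cong[OF has_derivative_unique[OF A B], of h] by simp
qed

lemma point:
  fixes U :: "(real^('n::finite)) set" and G :: "('n::finite) tv \<Rightarrow> real^'n"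
    and D :: "('n::finite) tv set" and P :: "'n tv \<Rightarrow> real"
  assumes U_open: "open U"
    and G_smooth: "smooth_on G (U \<times> (UNIV - {0}))"
    and G_hom: "\<And>x y t. x \<in> U \<Longrightarrow> y \<noteq> 0 \<Longrightarrow> t > 0 \<Longrightarrow> G (x, t *\<^sub>R y) = t\<^sup>2 *\<^sub>R G (x, y)"
    and D_open: "open D"
    and D_sub: "D \<subseteq> U \<times> (UNIV - {0})"
    and D_conic: "\<And>x y t. (x, y) \<in> D \<Longrightarrow> t > 0 \<Longrightarrow> (x, t *\<^sub>R y) \<in> D"
    and P_smooth: "smooth_on P D"
    and P_nz: "\<And>p. p \<in> D \<Longrightarrow> P p \<noteq> 0"
    and P_hom: "\<And>x y t. (x, y) \<in> D \<Longrightarrow> t > 0 \<Longrightarrow> P (x, t *\<^sub>R y) = t * P (x, y)"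
    and P_hol: "\<And>p X. p \<in> D \<Longrightarrow> X \<in> Hdist G p \<Longrightarrow> dfun P p X = 0"
    and pD: "p \<in> D"
  shows "VPdist G P p = {Z. fst Z = 0 \<and> dfun P p Z = 0}"
   and "is_direct_sum {X. vP G P p X = 0} (Hdist G p) (span {liouville p})"
   and "VPdist G P p \<subseteq> Vdist p"
   and "dim (VPdist G P p) = CARD('n) - 1"
   and "\<forall>X\<in>VPdist G P p. dfun P p X = 0"
   and "is_direct_sum (Vdist p) (VPdist G P p) (span {liouville p})"
   and "is_direct_sum {X. hP G P p X = 0} (Vdist p) (span {spray G p})"
   and "HPdist G P p \<subseteq> Hdist G p"
   and "dim (HPdist G P p) = CARD('n) - 1"
   and "\<forall>X\<in>HPdist G P p. dfun P p X = 0"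
   and "is_direct_sum (Hdist G p) (HPdist G P p) (span {spray G p})"
   and "Jend ` HPdist G P p = VPdist G P p"
proof -
  obtain x y where p: "p = (x, y)" by (cases p)
  have xy: "x \<in> U" "y \<noteq> 0" using D_sub pD p by auto
  have EG: "Gamma G p y = 2 *\<^sub>R G p" "linear (Gamma G p)"
    using euler_G[OF G_smooth U_open xy, OF G_hom[OF xy]] p by auto
  have EP: "dfun P p (0, y) = P p"
    using euler_P[OF D_open P_smooth pD[unfolded p], OF P_hom[OF pD[unfolded p]]] p by simp
  have lL: "linear (dfun P p)"
    unfolding dfun_def using linear_frechet_derivative smooth_diff_at[OF P_smooth D_open pD] by blast
  have hol: "dfun P p (u, - Gamma G p u) = 0" for u
  proof -
    have "hproj G p (u, 0) \<in> Hdist G p" unfolding Hdist_def by (rule rangeI)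
    then show ?thesis using P_hol[OF pD] unfolding hproj_def by simp
  qed
  note R = alg[OF lL EG(2) EP P_nz[OF pD] EG(1) xy(2) hol,
     of "vP G P p" "hP G P p" "Hdist G p"]
  have e1: "vP G P p X = (0, snd X + Gamma G p (fst X)) - (dfun P p (0, snd X + Gamma G p (fst X)) / P p) *\<^sub>R (0, y)" for X
    unfolding vP_def vproj_def liouville_def p by simp
  have e2: "hP G P p X = (fst X, - Gamma G p (fst X)) - (dfun P p (0, fst X) / P p) *\<^sub>R (y, - (2 *\<^sub>R G p))" for X
    unfolding hP_def hproj_def Jend_def spray_def p by simp
  have e3: "Hdist G p = range (\<lambda>X::'n tv. (fst X, - Gamma G p (fst X)))"
    unfolding Hdist_def hproj_def by simp
  note R = R[OF e1 e2 e3]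
  have V: "Vdist p = {X. fst X = 0}" unfolding Vdist_def by simp
  have C: "liouville p = (0, y)" unfolding liouville_def p by simp
  have S: "spray G p = (y, - (2 *\<^sub>R G p))" unfolding spray_def p by simp
  show "VPdist G P p = {Z. fst Z = 0 \<and> dfun P p Z = 0}" unfolding VPdist_def by (rule R(1))
  show "is_direct_sum {X. vP G P p X = 0} (Hdist G p) (span {liouville p})" unfolding C by (rule R(2))
  show "VPdist G P p \<subseteq> Vdist p" unfolding VPdist_def V by (rule R(3))
  show "dim (VPdist G P p) = CARD('n) - 1" unfolding VPdist_def by (rule R(4))
  show "\<forall>X\<in>VPdist G P p. dfun P p X = 0" unfolding VPdist_def by (rule R(5))
  show "is_direct_sum (Vdist p) (VPdist G P p) (span {liouville p})" unfolding VPdist_def V C by (rule R(6))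
  show "is_direct_sum {X. hP G P p X = 0} (Vdist p) (span {spray G p})" unfolding V S by (rule R(7))
  show "HPdist G P p \<subseteq> Hdist G p" unfolding HPdist_def by (rule R(8))
  show "dim (HPdist G P p) = CARD('n) - 1" unfolding HPdist_def by (rule R(9))
  show "\<forall>X\<in>HPdist G P p. dfun P p X = 0" unfolding HPdist_def by (rule R(10))
  show "is_direct_sum (Hdist G p) (HPdist G P p) (span {spray G p})" unfolding HPdist_def S by (rule R(11))
  show "Jend ` HPdist G P p = VPdist G P p" unfolding HPdist_def VPdist_def by (rule R(12))
qed

theorem lemma3p2:
  fixes U :: "(real^('n::finite)) set" and G :: "('n::finite) tv \<Rightarrow> real^'n"
    and D :: "('n::finite) tv set" and P :: "'n tv \<Rightarrow> real"
  assumes U_open: "open U"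
    and G_smooth: "smooth_on G (U \<times> (UNIV - {0}))"
    and G_hom: "\<And>x y t. x \<in> U \<Longrightarrow> y \<noteq> 0 \<Longrightarrow> t > 0 \<Longrightarrow> G (x, t *\<^sub>R y) = t\<^sup>2 *\<^sub>R G (x, y)"
    and D_open: "open D"
    and D_sub: "D \<subseteq> U \<times> (UNIV - {0})"
    and D_conic: "\<And>x y t. (x, y) \<in> D \<Longrightarrow> t > 0 \<Longrightarrow> (x, t *\<^sub>R y) \<in> D"
    and P_smooth: "smooth_on P D"
    and P_nz: "\<And>p. p \<in> D \<Longrightarrow> P p \<noteq> 0"
    and P_hom: "\<And>x y t. (x, y) \<in> D \<Longrightarrow> t > 0 \<Longrightarrow> P (x, t *\<^sub>R y) = t * P (x, y)"
    and P_hol: "\<And>p X. p \<in> D \<Longrightarrow> X \<in> Hdist G p \<Longrightarrow> dfun P p X = 0"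
  shows
    "(\<forall>p\<in>D.
        is_direct_sum {X. vP G P p X = 0} (Hdist G p) (span {liouville p})
      \<and> VPdist G P p \<subseteq> Vdist p \<and> dim (VPdist G P p) = CARD('n) - 1
      \<and> (\<forall>X\<in>VPdist G P p. dfun P p X = 0)
      \<and> is_direct_sum (Vdist p) (VPdist G P p) (span {liouville p}))
   \<and> involutive (VPdist G P) D
   \<and> (\<forall>p\<in>D.
        is_direct_sum {X. hP G P p X = 0} (Vdist p) (span {spray G p})
      \<and> HPdist G P p \<subseteq> Hdist G p \<and> dim (HPdist G P p) = CARD('n) - 1
      \<and> (\<forall>X\<in>HPdist G P p. dfun P p X = 0)
      \<and> is_direct_sum (Hdist G p) (HPdist G P p) (span {spray G p}))
   \<and> (\<forall>p\<in>D. Jend ` HPdist G P p = VPdist G P p)"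
proof -
  note PT = point[OF assms]
  have inv: "involutive (VPdist G P) D"
    unfolding involutive_def
  proof (intro allI impI ballI)
    fix W X Y q
    assume H: "open W \<and> W \<subseteq> D \<and> smooth_on X W \<and> smooth_on Y W \<and> (\<forall>q\<in>W. X q \<in> VPdist G P q \<and> Y q \<in> VPdist G P q)"
      and q: "q \<in> W"
    have W: "open W" "W \<subseteq> D" using H by auto
    have Xd: "X differentiable (at q)" using smooth_diff_at[of X W q] H q by blast
    have Yd: "Y differentiable (at q)" using smooth_diff_at[of Y W q] H q by blast
    have XV: "fst (X y) = 0 \<and> frechet_derivative P (at y) (X y) = 0" if "y \<in> W" for y
      using H that PT(1)[of y] W unfolding dfun_def by blast
    have YV: "fst (Y y) = 0 \<and> frechet_derivative P (at y) (Y y) = 0" if "y \<in> W" for y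
      using H that PT(1)[of y] W unfolding dfun_def by blast
    have f1: "fst (lie_bracket X Y q) = 0"
      unfolding lie_bracket_def
      using fst_deriv_zero[OF W(1) q Yd, of "X q"] fst_deriv_zero[OF W(1) q Xd, of "Y q"] XV YV by simp
    have f2: "dfun P q (lie_bracket X Y q) = 0"
      unfolding lie_bracket_def dfun_def
      by (rule bracket_zero[OF P_smooth D_open W q Xd Yd]) (use XV YV in auto)
    show "lie_bracket X Y q \<in> VPdist G P q"
      using PT(1)[of q] f1 f2 W q by blast
  qed
  show ?thesis
    using inv PT(2-12) by blast
qed

end
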